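(* Let $\mathcal{A}$ be the adjacency matrix of a graph on nodes $1,\dots,N$ with $\mathcal{A}_{ii}=1$ for all $i$, and let $H$ be a finite-dimensional, proper LTI system (proper rational transfer matrix) whose input and output are each partitioned into $N$ sub-signals. If $H$ is TF-structured with respect to $\mathcal{A}$, then $H$ is $\mathcal{A}$-structured-realizable. If in addition the feedthrough term $H(\infty)$ is block diagonal, then $H$ is also $\mathcal{A}$-network-realizable. The converse does not hold: there exist a graph $\mathcal{A}$ and a system $H$ which is $\mathcal{A}$-structured-realizable (and even $\mathcal{A}$-network-realizable) but not TF-structured with respect to $\mathcal{A}$.
   Context: A matrix $M$ partitioned into $N\times N$ blocks is called $\mathcal{A}$-structured, written $M\in\mathcal{S}(\mathcal{A})$, if its $(i,j)$ block is zero whenever $\mathcal{A}_{ij}=0$. An LTI system $H$ with inputs and outputs partitioned into $N$ sub-signals is $\mathcal{A}$-structured-realizable if it has a state-space realization $H(s)=C(sI-A)^{-1}B+D$, with the state also partitioned into $N$ (possibly empty) sub-states, such that $A,B,C,D\in\mathcal{S}(\mathcal{A})$; it is $\mathcal{A}$-network-realizable if in addition either both $B,D$ or both $C,D$ are block diagonal. $H$ is TF-structured with respect to $\mathcal{A}$ if the $(i,j)$ block $H_{ij}(s)$ of its transfer matrix is identically zero whenever $\mathcal{A}_{ij}=0$. *)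

theory Defs
  imports "HOL-Analysis.Analysis" "HOL-Computational_Algebra.Polynomial"
          "Jordan_Normal_Form.Gauss_Jordan_Elimination"
begin

(* A partition of an index range {0..<sum_list ss} into length ss consecutive
   (possibly empty) blocks of sizes ss!0, ss!1, ...  blk ss k is the block
   containing position k. *)
definition blk :: "nat list \<Rightarrow> nat \<Rightarrow> nat" where
  "blk ss k = (LEAST i. k < sum_list (take (Suc i) ss))"

definition structured :: "(nat \<Rightarrow> nat \<Rightarrow> bool) \<Rightarrow> nat list \<Rightarrow> nat list \<Rightarrow> 'a::zero mat \<Rightarrow> bool" where
  "structured Adj rs cs M \<longleftrightarrow>
     M \<in> carrier_mat (sum_list rs) (sum_list cs) \<and>
     (\<forall>k < sum_list rs. \<forall>l < sum_list cs. \<not> Adj (blk rs k) (blk cs l) \<longrightarrow> M $$ (k, l) = 0)"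

definition block_diag :: "nat list \<Rightarrow> nat list \<Rightarrow> 'a::zero mat \<Rightarrow> bool" where
  "block_diag rs cs M \<longleftrightarrow> structured (\<lambda>i j. i = j) rs cs M"

(* transfer matrix C (sI - A)^{-1} B + D of a real state-space realization,
   evaluated at s (meaningful where sI - A is invertible) *)
definition tfm :: "real mat \<Rightarrow> real mat \<Rightarrow> real mat \<Rightarrow> real mat \<Rightarrow> complex \<Rightarrow> complex mat" where
  "tfm A B C D s =
     map_mat complex_of_real C *
     the (mat_inverse (s \<cdot>\<^sub>m 1\<^sub>m (dim_row A) - map_mat complex_of_real A)) *
     map_mat complex_of_real B + map_mat complex_of_real D"

(* H realized by (A,B,C,D): equal as rational matrices, i.e. for all but finitely many s *)
definition realizes :: "real mat \<Rightarrow> real mat \<Rightarrow> real mat \<Rightarrow> real mat \<Rightarrow> (complex \<Rightarrow> complex mat) \<Rightarrow> bool" where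
  "realizes A B C D H \<longleftrightarrow> (\<forall>\<^sub>F s in cofinite. H s = tfm A B C D s)"

definition proper_rational_tf :: "nat list \<Rightarrow> nat list \<Rightarrow> (complex \<Rightarrow> complex mat) \<Rightarrow> bool" where
  "proper_rational_tf ps ms H \<longleftrightarrow>
     (\<forall>s. H s \<in> carrier_mat (sum_list ps) (sum_list ms)) \<and>
     (\<forall>k < sum_list ps. \<forall>l < sum_list ms. \<exists>n d :: real poly.
        d \<noteq> 0 \<and> degree n \<le> degree d \<and>
        (\<forall>\<^sub>F s in cofinite. H s $$ (k, l) =
            poly (map_poly complex_of_real n) s / poly (map_poly complex_of_real d) s))"

definition structured_realizable :: "(nat \<Rightarrow> nat \<Rightarrow> bool) \<Rightarrow> nat list \<Rightarrow> nat list \<Rightarrow> (complex \<Rightarrow> complex mat) \<Rightarrow> bool" where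
  "structured_realizable Adj ps ms H \<longleftrightarrow>
     (\<exists>ns A B C D. length ns = length ps \<and>
        structured Adj ns ns A \<and> structured Adj ns ms B \<and>
        structured Adj ps ns C \<and> structured Adj ps ms D \<and> realizes A B C D H)"

definition network_realizable :: "(nat \<Rightarrow> nat \<Rightarrow> bool) \<Rightarrow> nat list \<Rightarrow> nat list \<Rightarrow> (complex \<Rightarrow> complex mat) \<Rightarrow> bool" where
  "network_realizable Adj ps ms H \<longleftrightarrow>
     (\<exists>ns A B C D. length ns = length ps \<and>
        structured Adj ns ns A \<and> structured Adj ns ms B \<and>
        structured Adj ps ns C \<and> structured Adj ps ms D \<and> realizes A B C D H \<and>
        ((block_diag ns ms B \<and> block_diag ps ms D) \<or> (block_diag ps ns C \<and> block_diag ps ms D)))"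

definition tf_structured :: "(nat \<Rightarrow> nat \<Rightarrow> bool) \<Rightarrow> nat list \<Rightarrow> nat list \<Rightarrow> (complex \<Rightarrow> complex mat) \<Rightarrow> bool" where
  "tf_structured Adj ps ms H \<longleftrightarrow>
     (\<forall>k < sum_list ps. \<forall>l < sum_list ms. \<not> Adj (blk ps k) (blk ms l) \<longrightarrow>
        (\<forall>\<^sub>F s in cofinite. H s $$ (k, l) = 0))"

definition feedthrough_block_diag :: "nat list \<Rightarrow> nat list \<Rightarrow> (complex \<Rightarrow> complex mat) \<Rightarrow> bool" where
  "feedthrough_block_diag ps ms H \<longleftrightarrow>
     (\<forall>k < sum_list ps. \<forall>l < sum_list ms. blk ps k \<noteq> blk ms l \<longrightarrow>
        ((\<lambda>s. H s $$ (k, l)) \<longlongrightarrow> 0) at_infinity)"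

end

theory Submission
  imports Defs "Jordan_Normal_Form.Char_Poly"
begin

lemma sum_list_take_mono: "i \<le> j \<Longrightarrow> sum_list (take i (ss::nat list)) \<le> sum_list (take j ss)"
proof (induction ss arbitrary: i j)
  case (Cons a ss)
  then show ?case by (cases i; cases j; auto)
qed simp

lemma blk_eq:
  assumes "sum_list (take i ss) \<le> k" "k < sum_list (take (Suc i) ss)"
  shows "blk ss k = i"
  unfolding blk_def
proof (rule Least_equality)
  show "k < sum_list (take (Suc i) ss)" by fact
  fix j assume j: "k < sum_list (take (Suc j) ss)"
  show "i \<le> j"
  proof (rule ccontr)
    assume "\<not> i \<le> j"
    then have "Suc j \<le> i" by simp
    from sum_list_take_mono[OF this, of ss] assms(1) j show False by simp
  qed
qed

lemma blk_ex:
  fixes ss :: "nat list"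
  assumes "k < sum_list ss"
  shows "\<exists>i < length ss. sum_list (take i ss) \<le> k \<and> k < sum_list (take (Suc i) ss)"
  using assms
proof (induction ss arbitrary: k)
  case Nil then show ?case by simp
next
  case (Cons a ss)
  show ?case
  proof (cases "k < a")
    case True then show ?thesis by (intro exI[of _ 0]) auto
  next
    case False
    with Cons.prems have "k - a < sum_list ss" by simp
    from Cons.IH[OF this] obtain i where "i < length ss" "sum_list (take i ss) \<le> k - a"
      "k - a < sum_list (take (Suc i) ss)" by blast
    with False show ?thesis by (intro exI[of _ "Suc i"]) auto
  qed
qed

lemma blk_props:
  assumes "k < sum_list ss"
  shows "blk ss k < length ss" "sum_list (take (blk ss k) ss) \<le> k" "k < sum_list (take (Suc (blk ss k)) ss)"
  using blk_ex[OF assms] blk_eq by metis+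

lemma blk_scale:
  assumes "n > 0" "q < n * sum_list ps"
  shows "blk (map (\<lambda>x. n * x) ps) q = blk ps (q div n)"
proof -
  have qd: "q div n < sum_list ps" using assms by (simp add: div_less_iff_less_mult mult.commute)
  note b = blk_props[OF qd]
  let ?i = "blk ps (q div n)"
  have tk: "\<And>j. sum_list (take j (map (\<lambda>x. n * x) ps)) = n * sum_list (take j ps)"
    by (simp add: take_map sum_list_const_mult)
  show ?thesis
  proof (rule blk_eq)
    show "sum_list (take ?i (map ((*) n) ps)) \<le> q" unfolding tk
      using b(2) assms(1) by (meson dual_order.trans mult_le_mono2 times_div_less_eq_dividend)
    show "q < sum_list (take (Suc ?i) (map ((*) n) ps))" unfolding tk
      using b(3) assms(1) by (simp add: div_less_iff_less_mult mult.commute)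
  qed
qed

lemma block_diag_structured:
  assumes "block_diag rs cs M" "\<forall>i < length rs. Adj i i"
  shows "structured Adj rs cs M"
  using assms blk_props(1) unfolding block_diag_def structured_def by metis

lemma cofinite_at_infinity:
  fixes P :: "'a::real_normed_vector \<Rightarrow> bool"
  assumes "\<forall>\<^sub>F x in cofinite. P x"
  shows "\<forall>\<^sub>F x in at_infinity. P x"
proof -
  have "finite {x. \<not> P x}" using assms by (simp add: eventually_cofinite)
  then have "bounded {x. \<not> P x}" by (rule finite_imp_bounded)
  then obtain b where b: "\<And>x. \<not> P x \<Longrightarrow> norm x \<le> b" unfolding bounded_iff by blast
  show ?thesis unfolding eventually_at_infinity
    by (rule exI[of _ "b + 1"]) (use b in force)
qed

lemma inv_exists_cofinite:
  fixes A :: "complex mat"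
  assumes A: "A \<in> carrier_mat n n"
  shows "\<forall>\<^sub>F s in cofinite. \<exists>Y. mat_inverse (s \<cdot>\<^sub>m 1\<^sub>m n - A) = Some Y"
proof -
  have cp: "char_poly A \<noteq> 0" using degree_monic_char_poly[OF A] by auto
  have fin: "finite {s. poly (char_poly A) s = 0}" using poly_roots_finite[OF cp] .
  have "\<exists>Y. mat_inverse (s \<cdot>\<^sub>m 1\<^sub>m n - A) = Some Y" if s: "poly (char_poly A) s \<noteq> 0" for s
  proof -
    have eq: "- (char_matrix A s) = s \<cdot>\<^sub>m 1\<^sub>m n - A"
      unfolding char_matrix_def using A by (intro eq_matI) auto
    have M: "s \<cdot>\<^sub>m 1\<^sub>m n - A \<in> carrier_mat n n" using A by auto
    have "det (s \<cdot>\<^sub>m 1\<^sub>m n - A) \<noteq> 0" using s char_poly_matrix[OF A, of s] eq by simp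
    from det_non_zero_imp_unit[OF M this, where b="()"] mat_inverse(1)[OF M, where b="()"]
    show ?thesis by (cases "mat_inverse (s \<cdot>\<^sub>m 1\<^sub>m n - A)") auto
  qed
  then have "{s. \<nexists>Y. mat_inverse (s \<cdot>\<^sub>m 1\<^sub>m n - A) = Some Y} \<subseteq> {s. poly (char_poly A) s = 0}"
    by blast
  then show ?thesis unfolding eventually_cofinite using finite_subset fin by blast
qed

lemma tfm_via_V:
  fixes A B C D :: "real mat" and V :: "complex mat"
  assumes A: "A \<in> carrier_mat r r" and B: "B \<in> carrier_mat r m" and C: "C \<in> carrier_mat p r"
    and D: "D \<in> carrier_mat p m"
    and Y: "mat_inverse (s \<cdot>\<^sub>m 1\<^sub>m r - map_mat complex_of_real A) = Some Y"
    and V: "V \<in> carrier_mat p r"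
    and VM: "V * (s \<cdot>\<^sub>m 1\<^sub>m r - map_mat complex_of_real A) = map_mat complex_of_real C"
  shows "tfm A B C D s = V * map_mat complex_of_real B + map_mat complex_of_real D"
proof -
  let ?M = "s \<cdot>\<^sub>m 1\<^sub>m r - map_mat complex_of_real A"
  have M: "?M \<in> carrier_mat r r" using A by auto
  from mat_inverse(2)[OF M Y] have MY: "?M * Y = 1\<^sub>m r" and Yc: "Y \<in> carrier_mat r r" by auto
  have "map_mat complex_of_real C * Y = V * ?M * Y" using VM by simp
  also have "\<dots> = V * (?M * Y)" using V M Yc by (simp add: assoc_mult_mat)
  also have "\<dots> = V" using MY V by simp
  finally have CY: "map_mat complex_of_real C * Y = V" .
  show ?thesis unfolding tfm_def using A Y CY by simp
qed

lemma sum_block: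
  fixes f :: "nat \<Rightarrow> 'a::comm_monoid_add"
  assumes "k < p"
  shows "(\<Sum>q<p*n. if q div n = k then f q else 0) = (\<Sum>i<n. f (k*n+i))"
proof -
  have "(\<Sum>q<p*n. if q div n = k then f q else 0) =
        (\<Sum>m'<p. \<Sum>q\<in>{m'*n..<m'*n+n}. if q div n = k then f q else 0)"
    by (rule sum.nat_group[symmetric])
  also have "\<dots> = (\<Sum>m'<p. if m' = k then (\<Sum>q\<in>{m'*n..<m'*n+n}. f q) else 0)"
  proof (rule sum.cong[OF refl])
    fix m' assume "m' \<in> {..<p}"
    have "q div n = m'" if "q \<in> {m'*n..<m'*n+n}" for q
      using that by (intro div_nat_eqI) (auto simp: algebra_simps)
    then show "(\<Sum>q\<in>{m'*n..<m'*n+n}. if q div n = k then f q else 0) =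
               (if m' = k then (\<Sum>q\<in>{m'*n..<m'*n+n}. f q) else 0)"
      by (auto intro: sum.neutral)
  qed
  also have "\<dots> = (\<Sum>q\<in>{k*n..<k*n+n}. f q)" using assms by (simp add: sum.delta)
  also have "\<dots> = (\<Sum>i<n. f (k*n+i))"
  proof -
    have "(\<Sum>q\<in>{0+k*n..<n+k*n}. f q) = (\<Sum>i\<in>{0..<n}. f (i + k*n))"
      by (rule sum.shift_bounds_nat_ivl)
    then show ?thesis by (simp add: atLeast0LessThan add.commute)
  qed
  finally show ?thesis .
qed

lemma kinner:
  fixes a :: "nat \<Rightarrow> real" and s :: complex
  assumes n: "n > 0" and j: "j < n"
  shows "(\<Sum>i<n. s^i * ((if i = j then s else 0) -
            of_real ((if i = Suc j then 1 else 0) - (if j = n - 1 then a i else 0)))) =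
         (if j = n - 1 then s^n + (\<Sum>i<n. of_real (a i) * s^i) else 0)"
proof -
  have "(\<Sum>i<n. s^i * ((if i = j then s else 0) -
            of_real ((if i = Suc j then 1 else 0) - (if j = n - 1 then a i else 0)))) =
        (\<Sum>i<n. (if i = j then s^Suc j else 0)) - (\<Sum>i<n. (if i = Suc j then s^Suc j else 0))
          + (if j = n - 1 then (\<Sum>i<n. of_real (a i) * s^i) else 0)"
  proof -
    have pt: "s^i * ((if i = j then s else 0) -
            of_real ((if i = Suc j then 1 else 0) - (if j = n - 1 then a i else 0))) =
          ((if i = j then s^Suc j else 0) - (if i = Suc j then s^Suc j else 0)) +
          (if j = n - 1 then of_real (a i) * s^i else 0)" for i
      by (auto simp: algebra_simps)
    show ?thesis unfolding pt sum.distrib sum_subtractf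
      by (cases "j = n - 1") simp_all
  qed
  also have "\<dots> = s^Suc j - (if Suc j < n then s^Suc j else 0) + (if j = n - 1 then (\<Sum>i<n. of_real (a i) * s^i) else 0)"
    using j by (simp add: sum.delta)
  also have "\<dots> = (if j = n - 1 then s^n + (\<Sum>i<n. of_real (a i) * s^i) else 0)"
    using j n by (auto simp flip: power_Suc)
  finally show ?thesis .
qed

lemma core:
  fixes a :: "nat \<Rightarrow> real" and rc :: "nat \<Rightarrow> nat \<Rightarrow> nat \<Rightarrow> real"
    and cc :: "nat \<Rightarrow> nat \<Rightarrow> real" and s :: complex
  assumes n: "n > 0"
    and A_def: "A = mat (p*n) (p*n) (\<lambda>(q,q'). if q div n = q' div n then
         (if q mod n = Suc (q' mod n) then 1 else 0) - (if q' mod n = n - 1 then a (q mod n) else 0) else 0)"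
    and B_def: "B = mat (p*n) m (\<lambda>(q,l). rc (q div n) l (q mod n))"
    and C_def: "C = mat p (p*n) (\<lambda>(k,q). if q div n = k \<and> q mod n = n - 1 then 1 else 0)"
    and D_def: "D = mat p m (\<lambda>(k,l). cc k l)"
    and dv: "s^n + (\<Sum>i<n. of_real (a i) * s^i) \<noteq> 0"
    and Y: "mat_inverse (s \<cdot>\<^sub>m 1\<^sub>m (p*n) - map_mat complex_of_real A) = Some Y"
  shows "tfm A B C D s = mat p m (\<lambda>(k,l). (\<Sum>i<n. of_real (rc k l i) * s^i) /
                 (s^n + (\<Sum>i<n. of_real (a i) * s^i)) + of_real (cc k l))"
proof -
  define dv where "dv = s^n + (\<Sum>i<n. of_real (a i) * s^i)"
  have dv0: "dv \<noteq> 0" using dv unfolding dv_def .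
  define V where "V = mat p (p*n) (\<lambda>(k,q). if q div n = k then s^(q mod n) / dv else 0)"
  let ?M = "s \<cdot>\<^sub>m 1\<^sub>m (p*n) - map_mat complex_of_real A"
  have V: "V \<in> carrier_mat p (p*n)" unfolding V_def by simp
  have Adim: "dim_row A = p*n" "dim_col A = p*n" unfolding A_def by simp_all
  have divmod: "(k*n+i) div n = k" "(k*n+i) mod n = i" if "i < n" for k i
    using that n by auto
  have VM: "V * ?M = map_mat complex_of_real C"
  proof (rule eq_matI)
    fix k q' assume k: "k < dim_row (map_mat complex_of_real C)" and q': "q' < dim_col (map_mat complex_of_real C)"
    then have k: "k < p" and q': "q' < p*n" unfolding C_def by auto
    have Mq: "?M $$ (q, q') = (if q = q' then s else 0) - of_real (A $$ (q,q'))" if "q < p*n" for q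
      using that q' Adim by simp
    have "(V * ?M) $$ (k,q') = (\<Sum>q<p*n. V $$ (k,q) * ?M $$ (q,q'))"
      using k q' V Adim by (simp add: scalar_prod_def atLeast0LessThan)
    also have "\<dots> = (\<Sum>q<p*n. if q div n = k then s^(q mod n) / dv * ?M $$ (q,q') else 0)"
      by (rule sum.cong) (use k in \<open>auto simp: V_def\<close>)
    also have "\<dots> = (\<Sum>i<n. s^((k*n+i) mod n) / dv * ?M $$ (k*n+i,q'))"
      by (rule sum_block[OF k])
    also have "\<dots> = (\<Sum>i<n. s^i / dv * ?M $$ (k*n+i,q'))"
      by (rule sum.cong) (auto simp: divmod)
    also have "\<dots> = map_mat complex_of_real C $$ (k,q')"
    proof (cases "q' div n = k")
      case False
      have "?M $$ (k*n+i,q') = 0" if i: "i < n" for i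
      proof -
        have lt: "k*n+i < p*n" using k i
          by (metis add_less_cancel_left less_le_trans mult_le_mono1 Suc_leI mult_Suc add.commute)
        have "k*n+i \<noteq> q'" using False divmod[OF i] by auto
        then show ?thesis using Mq[OF lt] False divmod[OF i] i lt q' by (simp add: A_def)
      qed
      then show ?thesis using False k q' by (simp add: C_def)
    next
      case True
      define j where "j = q' mod n"
      have j: "j < n" using n unfolding j_def by simp
      have q'eq: "q' = k*n + j" using True unfolding j_def by (metis div_mult_mod_eq)
      have Mi: "?M $$ (k*n+i,q') = (if i = j then s else 0) -
            of_real ((if i = Suc j then 1 else 0) - (if j = n - 1 then a i else 0))" if i: "i < n" for i
      proof -
        have lt: "k*n+i < p*n" using k i
          by (metis add_less_cancel_left less_le_trans mult_le_mono1 Suc_leI mult_Suc add.commute)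
        show ?thesis using Mq[OF lt] divmod[OF i] divmod[OF j] lt q' unfolding q'eq by (simp add: A_def)
      qed
      have "(\<Sum>i<n. s^i / dv * ?M $$ (k*n+i,q')) = (\<Sum>i<n. s^i * ?M $$ (k*n+i,q')) / dv"
        by (simp add: sum_divide_distrib)
      also have "\<dots> = (if j = n - 1 then dv else 0) / dv"
        using kinner[OF n j, of s a] Mi unfolding dv_def by simp
      also have "\<dots> = map_mat complex_of_real C $$ (k,q')"
        using dv0 k q' True unfolding C_def j_def by simp
      finally show ?thesis .
    qed
    finally show "(V * ?M) $$ (k,q') = map_mat complex_of_real C $$ (k,q')" .
  next
    show "dim_row (V * ?M) = dim_row (map_mat complex_of_real C)" using V by (simp add: C_def)
    show "dim_col (V * ?M) = dim_col (map_mat complex_of_real C)" using Adim by (simp add: C_def)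
  qed
  have tf: "tfm A B C D s = V * map_mat complex_of_real B + map_mat complex_of_real D"
    by (rule tfm_via_V[OF _ _ _ _ Y V VM]) (auto simp: A_def B_def C_def D_def)
  show ?thesis unfolding tf
  proof (rule eq_matI)
    fix k l assume "k < dim_row (mat p m (\<lambda>(k,l). (\<Sum>i<n. of_real (rc k l i) * s^i) /
                 (s^n + (\<Sum>i<n. of_real (a i) * s^i)) + of_real (cc k l)))"
      "l < dim_col (mat p m (\<lambda>(k,l). (\<Sum>i<n. of_real (rc k l i) * s^i) /
                 (s^n + (\<Sum>i<n. of_real (a i) * s^i)) + of_real (cc k l)))"
    then have k: "k < p" and l: "l < m" by auto
    have "(V * map_mat complex_of_real B) $$ (k,l) = (\<Sum>q<p*n. V $$ (k,q) * of_real (B $$ (q,l)))"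
      using k l V by (simp add: scalar_prod_def atLeast0LessThan B_def)
    also have "\<dots> = (\<Sum>q<p*n. if q div n = k then s^(q mod n) / dv * of_real (B $$ (q,l)) else 0)"
      by (rule sum.cong) (use k in \<open>auto simp: V_def\<close>)
    also have "\<dots> = (\<Sum>i<n. s^((k*n+i) mod n) / dv * of_real (B $$ (k*n+i,l)))"
      by (rule sum_block[OF k])
    also have "\<dots> = (\<Sum>i<n. s^i / dv * of_real (B $$ (k*n+i,l)))"
      by (rule sum.cong) (auto simp: divmod)
    also have "\<dots> = (\<Sum>i<n. of_real (rc k l i) * s^i) / dv"
    proof -
      have "B $$ (k*n+i,l) = rc k l i" if i: "i < n" for i
      proof -
        have lt: "k*n+i < p*n" using k i
          by (metis add_less_cancel_left less_le_trans mult_le_mono1 Suc_leI mult_Suc add.commute)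
        show ?thesis using lt l divmod[OF i] by (simp add: B_def)
      qed
      then show ?thesis by (simp add: sum_divide_distrib mult.commute)
    qed
    finally show "(V * map_mat complex_of_real B + map_mat complex_of_real D) $$ (k,l) =
       mat p m (\<lambda>(k,l). (\<Sum>i<n. of_real (rc k l i) * s^i) /
                 (s^n + (\<Sum>i<n. of_real (a i) * s^i)) + of_real (cc k l)) $$ (k,l)"
      using k l V by (simp add: D_def B_def dv_def)
  qed (use V in \<open>auto simp: B_def D_def\<close>)
qed

definition ev :: "real poly \<Rightarrow> complex \<Rightarrow> complex" where
  "ev p s = poly (map_poly complex_of_real p) s"

interpretation ofr: map_poly_inj_idom_hom complex_of_real ..

lemma ev_mult[simp]: "ev (p * q) s = ev p s * ev q s"
  unfolding ev_def by (simp add: ofr.hom_mult)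
lemma ev_smult[simp]: "ev (Polynomial.smult c p) s = of_real c * ev p s"
  unfolding ev_def by (subst map_poly_smult) auto
lemma ev_diff[simp]: "ev (p - q) s = ev p s - ev q s"
  unfolding ev_def by (simp add: ofr.hom_minus)
lemma ev_0[simp]: "ev 0 s = 0" and ev_1[simp]: "ev 1 s = 1"
  unfolding ev_def by simp_all

lemma ev_lt:
  assumes "degree r < n"
  shows "ev r s = (\<Sum>i<n. of_real (coeff r i) * s^i)"
proof -
  have "ev r s = (\<Sum>i\<le>degree r. of_real (coeff r i) * s^i)"
    unfolding ev_def by (simp add: poly_altdef)
  also have "\<dots> = (\<Sum>i<n. of_real (coeff r i) * s^i)"
    by (rule sum.mono_neutral_left) (use assms in \<open>auto simp: coeff_eq_0\<close>)
  finally show ?thesis .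
qed

lemma ev_monic:
  assumes "degree d = n" "coeff d n = 1"
  shows "ev d s = s^n + (\<Sum>i<n. of_real (coeff d i) * s^i)"
proof -
  have "ev d s = (\<Sum>i\<le>n. of_real (coeff d i) * s^i)"
    unfolding ev_def using assms(1) by (simp add: poly_altdef)
  also have "\<dots> = s^n + (\<Sum>i<n. of_real (coeff d i) * s^i)"
    unfolding lessThan_Suc_atMost[symmetric] using assms(2) by simp
  finally show ?thesis .
qed

lemma ev_roots_finite:
  assumes "d \<noteq> 0"
  shows "\<forall>\<^sub>F s in cofinite. ev d s \<noteq> 0"
proof -
  have "map_poly complex_of_real d \<noteq> 0" using assms by simp
  from poly_roots_finite[OF this] show ?thesis unfolding eventually_cofinite ev_def by simp
qed

lemma part1:
  assumes len: "length ps = N" "length ms = N" and adj: "\<forall>i < N. Adj i i"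
    and prt: "proper_rational_tf ps ms H" and tfs: "tf_structured Adj ps ms H"
  shows "structured_realizable Adj ps ms H \<and>
         (feedthrough_block_diag ps ms H \<longrightarrow> network_realizable Adj ps ms H)"
proof -
  define p where "p = sum_list ps"
  define m where "m = sum_list ms"
  define Pr where "Pr = (\<lambda>k l (nd :: real poly \<times> real poly). snd nd \<noteq> 0 \<and> degree (fst nd) \<le> degree (snd nd) \<and>
      (\<forall>\<^sub>F s in cofinite. H s $$ (k,l) = ev (fst nd) s / ev (snd nd) s) \<and>
      (\<not> Adj (blk ps k) (blk ms l) \<longrightarrow> fst nd = 0))"
  have ex: "\<exists>nd. Pr k l nd" if k: "k < p" and l: "l < m" for k l
  proof (cases "Adj (blk ps k) (blk ms l)")
    case True
    from prt k l obtain nu de where "de \<noteq> 0" "degree nu \<le> degree de"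
      "\<forall>\<^sub>F s in cofinite. H s $$ (k, l) =
            poly (map_poly complex_of_real nu) s / poly (map_poly complex_of_real de) s"
      unfolding proper_rational_tf_def p_def m_def by blast
    then show ?thesis using True unfolding Pr_def ev_def by (intro exI[of _ "(nu,de)"]) auto
  next
    case False
    with tfs k l have "\<forall>\<^sub>F s in cofinite. H s $$ (k,l) = 0"
      unfolding tf_structured_def p_def m_def by blast
    then show ?thesis using False unfolding Pr_def by (intro exI[of _ "(0,1)"]) auto
  qed
  define nn where "nn = (\<lambda>k l. fst (SOME nd. Pr k l nd))"
  define dd where "dd = (\<lambda>k l. snd (SOME nd. Pr k l nd))"
  have Pnd: "Pr k l (nn k l, dd k l)" if "k < p" "l < m" for k l
    using someI_ex[OF ex[OF that]] unfolding nn_def dd_def by simp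
  have dd0: "dd k l \<noteq> 0" and degnd: "degree (nn k l) \<le> degree (dd k l)"
    and Hnd: "\<forall>\<^sub>F s in cofinite. H s $$ (k,l) = ev (nn k l) s / ev (dd k l) s"
    and nn0: "\<not> Adj (blk ps k) (blk ms l) \<Longrightarrow> nn k l = 0"
    if "k < p" "l < m" for k l
    using Pnd[OF that] unfolding Pr_def by auto
  define D0 where "D0 = [:1,1:] * (\<Prod>kl\<in>{..<p}\<times>{..<m}. dd (fst kl) (snd kl))"
  have pr0: "(\<Prod>kl\<in>{..<p}\<times>{..<m}. dd (fst kl) (snd kl)) \<noteq> 0"
    using dd0 by (subst prod_zero_iff) auto
  have x0: "[:1,1::real:] \<noteq> 0" by simp
  have D00: "D0 \<noteq> 0" unfolding D0_def using pr0 x0 no_zero_divisors by blast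
  have dvd: "dd k l dvd D0" if "k < p" "l < m" for k l
  proof -
    have "dd (fst (k,l)) (snd (k,l)) dvd (\<Prod>kl\<in>{..<p}\<times>{..<m}. dd (fst kl) (snd kl))"
      by (rule dvd_prodI) (use that in auto)
    then show ?thesis unfolding D0_def by (simp del: mult_pCons_left mult_pCons_right)
  qed
  define n where "n = degree D0"
  have n0: "n > 0"
  proof -
    have "degree D0 = degree [:1::real,1:] + degree (\<Prod>kl\<in>{..<p}\<times>{..<m}. dd (fst kl) (snd kl))"
      unfolding D0_def by (rule degree_mult_eq[OF x0 pr0])
    then show ?thesis unfolding n_def by simp
  qed
  define lc where "lc = lead_coeff D0"
  have lc0: "lc \<noteq> 0" using D00 unfolding lc_def by simp
  define dm where "dm = Polynomial.smult (inverse lc) D0"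
  have degdm: "degree dm = n" unfolding dm_def n_def using lc0 by simp
  have lcdm: "coeff dm n = 1" unfolding dm_def n_def lc_def using lc0 by (simp add: lc_def)
  have dm0: "dm \<noteq> 0" using lcdm by auto
  define Q where "Q = (\<lambda>k l. D0 div dd k l)"
  have DQ: "D0 = dd k l * Q k l" if "k < p" "l < m" for k l
    unfolding Q_def using dvd[OF that] by (simp add: dvd_mult_div_cancel)
  define P where "P = (\<lambda>k l. Polynomial.smult (inverse lc) (nn k l * Q k l))"
  have degP: "degree (P k l) \<le> n" if kl: "k < p" "l < m" for k l
  proof -
    have Q0: "Q k l \<noteq> 0" using DQ[OF kl] D00 by auto
    have "n = degree (dd k l) + degree (Q k l)" unfolding n_def
      by (subst DQ[OF kl]) (rule degree_mult_eq[OF dd0[OF kl] Q0])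
    moreover have "degree (nn k l * Q k l) \<le> degree (nn k l) + degree (Q k l)"
      by (rule degree_mult_le)
    ultimately have "degree (nn k l * Q k l) \<le> n" using degnd[OF kl] by linarith
    then show ?thesis unfolding P_def using degree_smult_le order_trans by blast
  qed
  define cc where "cc = (\<lambda>k l. coeff (P k l) n)"
  define r where "r = (\<lambda>k l. P k l - Polynomial.smult (cc k l) dm)"
  have degr: "degree (r k l) < n" if kl: "k < p" "l < m" for k l
  proof -
    have "degree (Polynomial.smult (cc k l) dm) \<le> n" using degdm degree_smult_le order_trans by blast
    then have le: "degree (r k l) \<le> n" unfolding r_def using degP[OF kl] degree_diff_le by blast
    have c0: "coeff (r k l) n = 0" unfolding r_def cc_def using lcdm by simp
    show ?thesis
    proof (rule ccontr)
      assume "\<not> degree (r k l) < n"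
      then have "degree (r k l) = n" using le by simp
      then have "r k l = 0" using c0 by (metis leading_coeff_0_iff)
      then show False using \<open>degree (r k l) = n\<close> n0 by simp
    qed
  qed
  have ratio: "ev (nn k l) s / ev (dd k l) s = ev (r k l) s / ev dm s + of_real (cc k l)"
    if kl: "k < p" "l < m" and s: "ev dm s \<noteq> 0" for k l s
  proof -
    have edm: "ev dm s = of_real (inverse lc) * (ev (dd k l) s * ev (Q k l) s)"
      unfolding dm_def by (subst DQ[OF kl]) simp
    have eP: "ev (P k l) s = of_real (inverse lc) * (ev (nn k l) s * ev (Q k l) s)"
      unfolding P_def by simp
    have nz: "ev (dd k l) s \<noteq> 0" "ev (Q k l) s \<noteq> 0" "complex_of_real (inverse lc) \<noteq> 0"
      using s edm by auto
    have "ev (nn k l) s / ev (dd k l) s = ev (P k l) s / ev dm s"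
      unfolding edm eP using nz by (simp add: field_simps)
    also have "ev (P k l) s = of_real (cc k l) * ev dm s + ev (r k l) s"
      unfolding r_def by simp
    finally show ?thesis using s by (simp add: field_simps)
  qed
  have rc0: "r k l = 0" and cc0: "cc k l = 0"
    if "k < p" "l < m" "\<not> Adj (blk ps k) (blk ms l)" for k l
    using nn0[OF that] unfolding r_def cc_def P_def by simp_all
  define a where "a = (\<lambda>i. coeff dm i)"
  define A :: "real mat" where "A = mat (p*n) (p*n) (\<lambda>(q,q'). if q div n = q' div n then
         (if q mod n = Suc (q' mod n) then 1 else 0) - (if q' mod n = n - 1 then a (q mod n) else 0) else 0)"
  define B :: "real mat" where "B = mat (p*n) m (\<lambda>(q,l). coeff (r (q div n) l) (q mod n))"
  define C :: "real mat" where "C = mat p (p*n) (\<lambda>(k,q). if q div n = k \<and> q mod n = n - 1 then 1 else 0)"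
  define D :: "real mat" where "D = mat p m (\<lambda>(k,l). cc k l)"
  have evdm: "ev dm s = s^n + (\<Sum>i<n. of_real (a i) * s^i)" for s
    unfolding a_def by (rule ev_monic[OF degdm lcdm])
  have real: "realizes A B C D H"
    unfolding realizes_def
  proof -
    have Ac: "map_mat complex_of_real A \<in> carrier_mat (p*n) (p*n)" unfolding A_def by simp
    have e1: "\<forall>\<^sub>F s in cofinite. \<exists>Y. mat_inverse (s \<cdot>\<^sub>m 1\<^sub>m (p*n) - map_mat complex_of_real A) = Some Y"
      by (rule inv_exists_cofinite[OF Ac])
    have e2: "\<forall>\<^sub>F s in cofinite. ev dm s \<noteq> 0" by (rule ev_roots_finite[OF dm0])
    have e3: "\<forall>\<^sub>F s in cofinite. \<forall>kl\<in>{..<p}\<times>{..<m}. H s $$ kl = ev (nn (fst kl) (snd kl)) s / ev (dd (fst kl) (snd kl)) s"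
      by (rule eventually_ball_finite) (use Hnd in auto)
    show "\<forall>\<^sub>F s in cofinite. H s = tfm A B C D s"
    proof (rule eventually_mono[OF eventually_conj[OF e1 eventually_conj[OF e2 e3]]])
      fix s assume "(\<exists>Y. mat_inverse (s \<cdot>\<^sub>m 1\<^sub>m (p*n) - map_mat complex_of_real A) = Some Y) \<and>
        ev dm s \<noteq> 0 \<and> (\<forall>kl\<in>{..<p}\<times>{..<m}. H s $$ kl = ev (nn (fst kl) (snd kl)) s / ev (dd (fst kl) (snd kl)) s)"
      then obtain Y where Y: "mat_inverse (s \<cdot>\<^sub>m 1\<^sub>m (p*n) - map_mat complex_of_real A) = Some Y"
        and s: "ev dm s \<noteq> 0" and Hs: "\<And>k l. k < p \<Longrightarrow> l < m \<Longrightarrow> H s $$ (k,l) = ev (nn k l) s / ev (dd k l) s"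
        by auto
      have tf: "tfm A B C D s = mat p m (\<lambda>(k,l). (\<Sum>i<n. of_real (coeff (r k l) i) * s^i) /
                 (s^n + (\<Sum>i<n. of_real (a i) * s^i)) + of_real (cc k l))"
        by (rule core[OF n0 A_def B_def C_def D_def _ Y]) (use s evdm in simp)
      have Hc: "H s \<in> carrier_mat p m" using prt unfolding proper_rational_tf_def p_def m_def by auto
      show "H s = tfm A B C D s" unfolding tf
      proof (rule eq_matI)
        fix k l assume "k < dim_row (mat p m (\<lambda>(k,l). (\<Sum>i<n. of_real (coeff (r k l) i) * s^i) /
                 (s^n + (\<Sum>i<n. of_real (a i) * s^i)) + of_real (cc k l)))"
          "l < dim_col (mat p m (\<lambda>(k,l). (\<Sum>i<n. of_real (coeff (r k l) i) * s^i) /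
                 (s^n + (\<Sum>i<n. of_real (a i) * s^i)) + of_real (cc k l)))"
        then have k: "k < p" and l: "l < m" by auto
        show "H s $$ (k,l) = mat p m (\<lambda>(k,l). (\<Sum>i<n. of_real (coeff (r k l) i) * s^i) /
                 (s^n + (\<Sum>i<n. of_real (a i) * s^i)) + of_real (cc k l)) $$ (k,l)"
          using Hs[OF k l] ratio[OF k l s] ev_lt[OF degr[OF k l], of s] evdm[of s] k l by simp
      qed (use Hc in auto)
    qed
  qed
  define ns where "ns = map (\<lambda>x. n * x) ps"
  have lenns: "length ns = length ps" unfolding ns_def by simp
  have sumns: "sum_list ns = p * n" unfolding ns_def p_def by (simp add: sum_list_const_mult mult.commute)
  have blkns: "blk ns q = blk ps (q div n)" if "q < p * n" for q
    unfolding ns_def by (rule blk_scale[OF n0]) (use that in \<open>simp add: p_def mult.commute\<close>)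
  have blkp: "blk ps k < N" if "k < p" for k using blk_props(1)[of k ps] that len unfolding p_def by simp
  have qdiv: "q div n < p" if "q < p * n" for q using that n0 by (simp add: div_less_iff_less_mult)
  have sA: "structured Adj ns ns A"
    unfolding structured_def sumns
  proof (intro conjI allI impI)
    show "A \<in> carrier_mat (p*n) (p*n)" unfolding A_def by simp
    fix q q' assume q: "q < p*n" and q': "q' < p*n" and na: "\<not> Adj (blk ns q) (blk ns q')"
    have "q div n \<noteq> q' div n"
    proof
      assume "q div n = q' div n"
      then have "blk ns q = blk ns q'" using blkns q q' by simp
      then show False using na adj blkp[OF qdiv[OF q]] blkns[OF q] by auto
    qed
    then show "A $$ (q,q') = 0" unfolding A_def using q q' by simp
  qed
  have sB: "structured Adj ns ms B"
    unfolding structured_def sumns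
  proof (intro conjI allI impI)
    show "B \<in> carrier_mat (p*n) (sum_list ms)" unfolding B_def m_def by simp
    fix q l assume q: "q < p*n" and l: "l < sum_list ms" and na: "\<not> Adj (blk ns q) (blk ms l)"
    have "r (q div n) l = 0" using rc0[OF qdiv[OF q] l[folded m_def]] na blkns[OF q] by simp
    then show "B $$ (q,l) = 0" unfolding B_def using q l m_def by simp
  qed
  have bC: "block_diag ps ns C"
    unfolding block_diag_def structured_def sumns
  proof (intro conjI allI impI)
    show "C \<in> carrier_mat (sum_list ps) (p*n)" unfolding C_def p_def by simp
    fix k q assume k: "k < sum_list ps" and q: "q < p*n" and na: "blk ps k \<noteq> blk ns q"
    then have "q div n \<noteq> k" using blkns[OF q] by auto
    then show "C $$ (k,q) = 0" unfolding C_def using k q p_def by simp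
  qed
  have sC: "structured Adj ps ns C" by (rule block_diag_structured[OF bC]) (use adj len in simp)
  have sD: "structured Adj ps ms D"
    unfolding structured_def
  proof (intro conjI allI impI)
    show "D \<in> carrier_mat (sum_list ps) (sum_list ms)" unfolding D_def p_def m_def by simp
    fix k l assume k: "k < sum_list ps" and l: "l < sum_list ms" and na: "\<not> Adj (blk ps k) (blk ms l)"
    show "D $$ (k,l) = 0" unfolding D_def using cc0[OF k[folded p_def] l[folded m_def] na] k l
      by (simp add: p_def m_def)
  qed
  have lim: "((\<lambda>s. H s $$ (k,l)) \<longlongrightarrow> of_real (cc k l)) at_infinity" if k: "k < p" and l: "l < m" for k l
  proof -
    have "\<forall>\<^sub>F s in cofinite. ev (r k l) s / ev dm s + of_real (cc k l) = H s $$ (k,l)"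
      by (rule eventually_mono[OF eventually_conj[OF ev_roots_finite[OF dm0] Hnd[OF k l]]])
        (use ratio[OF k l] in auto)
    then have ev_eq: "\<forall>\<^sub>F s in at_infinity. ev (r k l) s / ev dm s + of_real (cc k l) = H s $$ (k,l)"
      by (rule cofinite_at_infinity)
    have "degree (map_poly complex_of_real dm) > degree (map_poly complex_of_real (r k l))"
      using degr[OF k l] degdm by simp
    from poly_divide_tendsto_0_at_infinity[OF this]
    have "((\<lambda>s. ev (r k l) s / ev dm s) \<longlongrightarrow> 0) at_infinity" unfolding ev_def .
    then have "((\<lambda>s. ev (r k l) s / ev dm s + of_real (cc k l)) \<longlongrightarrow> 0 + of_real (cc k l)) at_infinity"
      by (intro tendsto_add tendsto_const)
    then show ?thesis using tendsto_cong[OF ev_eq] by simp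
  qed
  have bD: "block_diag ps ms D" if fb: "feedthrough_block_diag ps ms H"
    unfolding block_diag_def structured_def
  proof (intro conjI allI impI)
    show "D \<in> carrier_mat (sum_list ps) (sum_list ms)" unfolding D_def p_def m_def by simp
    fix k l assume k: "k < sum_list ps" and l: "l < sum_list ms" and na: "blk ps k \<noteq> blk ms l"
    have l0: "((\<lambda>s. H s $$ (k,l)) \<longlongrightarrow> 0) at_infinity" using fb k l na
      unfolding feedthrough_block_diag_def by blast
    have "complex_of_real (cc k l) = 0"
      using tendsto_unique[OF _ lim[OF k[folded p_def] l[folded m_def]] l0] trivial_limit_at_infinity
      by auto
    then show "D $$ (k,l) = 0" unfolding D_def using k l by (simp add: p_def m_def)
  qed
  show ?thesis
    unfolding structured_realizable_def network_realizable_def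
    using lenns sA sB sC sD real bC bD by blast
qed

lemma part2:
  "\<exists>(N::nat) (Adj :: nat \<Rightarrow> nat \<Rightarrow> bool) (ps::nat list) (ms::nat list) H.
            length ps = N \<and> length ms = N \<and> (\<forall>i < N. Adj i i) \<and>
            proper_rational_tf ps ms H \<and>
            structured_realizable Adj ps ms H \<and> network_realizable Adj ps ms H \<and>
            \<not> tf_structured Adj ps ms H"
proof -
  define Adj :: "nat \<Rightarrow> nat \<Rightarrow> bool" where "Adj = (\<lambda>i j. i = j \<or> (i = 1 \<and> j = 0) \<or> (i = 2 \<and> j = 1))"
  define ps :: "nat list" where "ps = [0,0,1]"
  define ms :: "nat list" where "ms = [1,0,0]"
  define ns :: "nat list" where "ns = [0,1,1]"
  define H :: "complex \<Rightarrow> complex mat" where "H = (\<lambda>s. mat 1 1 (\<lambda>_. 1 / s^2))"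
  define A :: "real mat" where "A = mat 2 2 (\<lambda>(i,j). if i = 1 \<and> j = 0 then 1 else 0)"
  define B :: "real mat" where "B = mat 2 1 (\<lambda>(i,j). if i = 0 then 1 else 0)"
  define C :: "real mat" where "C = mat 1 2 (\<lambda>(i,j). if j = 1 then 1 else 0)"
  define D :: "real mat" where "D = 0\<^sub>m 1 1"
  have b1: "blk ps 0 = 2" unfolding ps_def by (rule blk_eq) simp_all
  have b2: "blk ms 0 = 0" unfolding ms_def by (rule blk_eq) simp_all
  have b3: "blk ns 0 = 1" unfolding ns_def by (rule blk_eq) simp_all
  have b4: "blk ns 1 = 2" unfolding ns_def by (rule blk_eq) simp_all
  have sp: "sum_list ps = 1" "sum_list ms = 1" "sum_list ns = 2"
    unfolding ps_def ms_def ns_def by simp_all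
  have lt2: "(x::nat) < 2 \<longleftrightarrow> x = 0 \<or> x = 1" for x by auto
  have sA: "structured Adj ns ns A"
    unfolding structured_def sp using b3 b4 by (auto simp: A_def Adj_def lt2)
  have sB: "structured Adj ns ms B"
    unfolding structured_def sp using b2 b3 b4 by (auto simp: B_def Adj_def lt2)
  have bC: "block_diag ps ns C"
    unfolding block_diag_def structured_def sp using b1 b3 b4 by (auto simp: C_def lt2)
  have sC: "structured Adj ps ns C"
    unfolding structured_def sp using b1 b3 b4 by (auto simp: C_def Adj_def lt2)
  have bD: "block_diag ps ms D" unfolding block_diag_def structured_def sp by (simp add: D_def)
  have sD: "structured Adj ps ms D" unfolding structured_def sp by (simp add: D_def)
  have real: "realizes A B C D H"
    unfolding realizes_def
  proof -
    have Ac: "map_mat complex_of_real A \<in> carrier_mat 2 2" unfolding A_def by simp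
    have e1: "\<forall>\<^sub>F s in cofinite. \<exists>Y. mat_inverse (s \<cdot>\<^sub>m 1\<^sub>m 2 - map_mat complex_of_real A) = Some Y"
      by (rule inv_exists_cofinite[OF Ac])
    have e2: "\<forall>\<^sub>F s in cofinite. s \<noteq> (0::complex)" unfolding eventually_cofinite by simp
    show "\<forall>\<^sub>F s in cofinite. H s = tfm A B C D s"
    proof (rule eventually_mono[OF eventually_conj[OF e1 e2]])
      fix s :: complex assume "(\<exists>Y. mat_inverse (s \<cdot>\<^sub>m 1\<^sub>m 2 - map_mat complex_of_real A) = Some Y) \<and> s \<noteq> 0"
      then obtain Y where Y: "mat_inverse (s \<cdot>\<^sub>m 1\<^sub>m 2 - map_mat complex_of_real A) = Some Y"
        and s: "s \<noteq> 0" by auto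
      define V :: "complex mat" where "V = mat 1 2 (\<lambda>(i,j). if j = 0 then 1/s^2 else 1/s)"
      have V: "V \<in> carrier_mat 1 2" unfolding V_def by simp
      have VM: "V * (s \<cdot>\<^sub>m 1\<^sub>m 2 - map_mat complex_of_real A) = map_mat complex_of_real C"
        by (rule eq_matI) (use s in \<open>auto simp: V_def A_def C_def scalar_prod_def numeral_2_eq_2 lt2 field_simps power2_eq_square\<close>)
      have tf: "tfm A B C D s = V * map_mat complex_of_real B + map_mat complex_of_real D"
        by (rule tfm_via_V[OF _ _ _ _ Y V VM]) (auto simp: A_def B_def C_def D_def)
      show "H s = tfm A B C D s" unfolding tf
        by (rule eq_matI) (use s in \<open>auto simp: H_def V_def B_def D_def scalar_prod_def numeral_2_eq_2 lt2 field_simps power2_eq_square\<close>)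
    qed
  qed
  have prt: "proper_rational_tf ps ms H"
    unfolding proper_rational_tf_def sp
  proof (intro conjI allI impI)
    show "H s \<in> carrier_mat 1 1" for s unfolding H_def by simp
    fix k l :: nat assume "k < 1" "l < 1"
    then have kl: "k = 0" "l = 0" by auto
    show "\<exists>n d :: real poly. d \<noteq> 0 \<and> degree n \<le> degree d \<and>
        (\<forall>\<^sub>F s in cofinite. H s $$ (k, l) =
            poly (map_poly complex_of_real n) s / poly (map_poly complex_of_real d) s)"
    proof (intro exI conjI)
      show "[:0,0,1::real:] \<noteq> 0" by simp
      show "degree [:1::real:] \<le> degree [:0,0,1::real:]" by simp
      show "\<forall>\<^sub>F s in cofinite. H s $$ (k, l) =
            poly (map_poly complex_of_real [:1:]) s / poly (map_poly complex_of_real [:0,0,1:]) s"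
        by (rule always_eventually) (simp add: H_def kl power2_eq_square)
    qed
  qed
  have ntf: "\<not> tf_structured Adj ps ms H"
  proof
    assume "tf_structured Adj ps ms H"
    then have "\<forall>\<^sub>F s in cofinite. H s $$ (0, 0) = 0"
      unfolding tf_structured_def sp using b1 b2 by (auto simp: Adj_def)
    then have "finite {s::complex. s \<noteq> 0}" unfolding eventually_cofinite H_def by simp
    then have "finite (insert 0 {s::complex. s \<noteq> 0})" by simp
    moreover have "insert 0 {s::complex. s \<noteq> 0} = UNIV" by auto
    ultimately show False using infinite_UNIV_char_0 by metis
  qed
  have len: "length ps = 3" "length ms = 3" "length ns = length ps" unfolding ps_def ms_def ns_def by simp_all
  have adj: "\<forall>i<3. Adj i i" unfolding Adj_def by simp
  show ?thesis
    unfolding structured_realizable_def network_realizable_def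
    using len adj prt ntf sA sB sC sD bC bD real by blast
qed

theorem lemma1:
  shows "(\<forall>(N::nat) (Adj :: nat \<Rightarrow> nat \<Rightarrow> bool) (ps::nat list) (ms::nat list) H.
            length ps = N \<and> length ms = N \<and> (\<forall>i < N. Adj i i) \<and>
            proper_rational_tf ps ms H \<and> tf_structured Adj ps ms H \<longrightarrow>
              structured_realizable Adj ps ms H \<and>
              (feedthrough_block_diag ps ms H \<longrightarrow> network_realizable Adj ps ms H))
       \<and> (\<exists>(N::nat) (Adj :: nat \<Rightarrow> nat \<Rightarrow> bool) (ps::nat list) (ms::nat list) H.
            length ps = N \<and> length ms = N \<and> (\<forall>i < N. Adj i i) \<and>
            proper_rational_tf ps ms H \<and>
            structured_realizable Adj ps ms H \<and> network_realizable Adj ps ms H \<and>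
            \<not> tf_structured Adj ps ms H)"
  using part1 part2 by blast

end
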